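(* Let $\mathfrak{M}$ be a model, $x$ a variable, $\bar z=z_1,\dots,z_m$ a list of variables distinct from $x$, and $\psi,\theta$ formulas such that no variable of $\bar z$ occurs free in $\theta$. If $\psi$ is non-dependent of $x$ in $\mathfrak{M}$ provided $\theta$, then $$[\![\forall x\exists\bar z(\theta\to\psi)]\!]^{\mathfrak{M}}=[\![\exists x\theta\to\exists\bar z\,\forall x(\theta\to\psi)]\!]^{\mathfrak{M}},$$ and consequently, if moreover $\mathfrak{M}\models\exists x\theta$, then $[\![\forall x\exists\bar z(\theta\to\psi)]\!]^{\mathfrak{M}}=[\![\exists\bar z\,\forall x(\theta\to\psi)]\!]^{\mathfrak{M}}$.
   Context: Work in first-order logic with equality over a relational signature, with countably many variables $v_1,v_2,\dots$. A model $\mathfrak{M}$ has nonempty universe $M$; assignments are $\bar a\in M^\omega$ ($a_i$ is the value of $v_i$); for $x=v_i$, $b\in M$, $\bar a^x_b$ is $\bar a$ with $i$-th entry replaced by $b$. $[\![\varphi]\!]^{\mathfrak{M}}=\{\bar a\in M^\omega:\mathfrak{M}\models\varphi[\bar a]\}$; $\mathfrak{M}\models\chi$ means every $\bar a$ satisfies $\chi$; $\exists\bar z$ abbreviates $\exists z_1\dots\exists z_m$. Definition: $\psi$ is non-dependent of $x$ in $\mathfrak{M}$ provided $\theta$ iff for all $\bar a\in M^\omega$, $b\in M$: if $\mathfrak{M}\models\theta[\bar a]$ and $\mathfrak{M}\models\theta[\bar a^x_b]$ then ($\mathfrak{M}\models\psi[\bar a]\iff\mathfrak{M}\models\psi[\bar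 a^x_b]$). *)

theory Defs
  imports Main
begin

text \<open>First-order logic with equality over a relational signature.
  Variables are natural numbers (variable v_(i+1) is index i);
  relation symbols are of type 'p and are applied to lists of variables.\<close>

datatype 'p fm =
    Eq nat nat
  | Rel 'p "nat list"
  | Neg "'p fm"
  | Conj "'p fm" "'p fm"
  | Disj "'p fm" "'p fm"
  | Imp "'p fm" "'p fm"
  | Ex nat "'p fm"
  | All nat "'p fm"

fun fv :: "'p fm \<Rightarrow> nat set" where
  "fv (Eq i j) = {i, j}"
| "fv (Rel P xs) = set xs"
| "fv (Neg f) = fv f"
| "fv (Conj f g) = fv f \<union> fv g"
| "fv (Disj f g) = fv f \<union> fv g"
| "fv (Imp f g) = fv f \<union> fv g"
| "fv (Ex x f) = fv f - {x}"
| "fv (All x f) = fv f - {x}"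

fun sat :: "'a set \<Rightarrow> ('p \<Rightarrow> 'a list \<Rightarrow> bool) \<Rightarrow> (nat \<Rightarrow> 'a) \<Rightarrow> 'p fm \<Rightarrow> bool" where
  "sat M I a (Eq i j) = (a i = a j)"
| "sat M I a (Rel P xs) = I P (map a xs)"
| "sat M I a (Neg f) = (\<not> sat M I a f)"
| "sat M I a (Conj f g) = (sat M I a f \<and> sat M I a g)"
| "sat M I a (Disj f g) = (sat M I a f \<or> sat M I a g)"
| "sat M I a (Imp f g) = (sat M I a f \<longrightarrow> sat M I a g)"
| "sat M I a (Ex x f) = (\<exists>b\<in>M. sat M I (a(x := b)) f)"
| "sat M I a (All x f) = (\<forall>b\<in>M. sat M I (a(x := b)) f)"

definition assignments :: "'a set \<Rightarrow> (nat \<Rightarrow> 'a) set" where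
  "assignments M = {a. \<forall>i. a i \<in> M}"

definition denot :: "'a set \<Rightarrow> ('p \<Rightarrow> 'a list \<Rightarrow> bool) \<Rightarrow> 'p fm \<Rightarrow> (nat \<Rightarrow> 'a) set" where
  "denot M I f = {a \<in> assignments M. sat M I a f}"

definition models :: "'a set \<Rightarrow> ('p \<Rightarrow> 'a list \<Rightarrow> bool) \<Rightarrow> 'p fm \<Rightarrow> bool" where
  "models M I f = (\<forall>a\<in>assignments M. sat M I a f)"

definition exs :: "nat list \<Rightarrow> 'p fm \<Rightarrow> 'p fm" where
  "exs zs f = foldr Ex zs f"

definition non_dependent :: "'a set \<Rightarrow> ('p \<Rightarrow> 'a list \<Rightarrow> bool) \<Rightarrow> 'p fm \<Rightarrow> nat \<Rightarrow> 'p fm \<Rightarrow> bool" where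
  "non_dependent M I \<psi> x \<theta> =
     (\<forall>a\<in>assignments M. \<forall>b\<in>M.
        sat M I a \<theta> \<longrightarrow> sat M I (a(x := b)) \<theta> \<longrightarrow>
        (sat M I a \<psi> \<longleftrightarrow> sat M I (a(x := b)) \<psi>))"

end

theory Submission
  imports Defs
begin

lemma sat_agree:
  "(\<forall>i\<in>fv f. a i = a' i) \<Longrightarrow> sat M I a f = sat M I a' f"
proof (induction f arbitrary: a a')
  case (Rel P xs)
  then have m: "map a xs = map a' xs" by (intro map_cong) auto
  show ?case by (simp only: sat.simps m)
next
  case (Ex z f)
  have "\<And>b. \<forall>i\<in>fv f. (a(z:=b)) i = (a'(z:=b)) i" using Ex.prems by auto
  then have "\<And>b. sat M I (a(z:=b)) f = sat M I (a'(z:=b)) f" using Ex.IH by blast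
  then show ?case by simp
next
  case (All z f)
  have "\<And>b. \<forall>i\<in>fv f. (a(z:=b)) i = (a'(z:=b)) i" using All.prems by auto
  then have "\<And>b. sat M I (a(z:=b)) f = sat M I (a'(z:=b)) f" using All.IH by blast
  then show ?case by simp
next
  case (Conj f g) then show ?case by (metis UnCI fv.simps(4) sat.simps(4))
next
  case (Disj f g) then show ?case by (metis UnCI fv.simps(5) sat.simps(5))
next
  case (Imp f g) then show ?case by (metis UnCI fv.simps(6) sat.simps(6))
qed auto

lemma sat_exs:
  "sat M I a (exs zs f) \<longleftrightarrow>
    (\<exists>a'. (\<forall>i. i \<notin> set zs \<longrightarrow> a' i = a i) \<and> (\<forall>i\<in>set zs. a' i \<in> M) \<and> sat M I a' f)"
proof (induction zs arbitrary: a)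
  case Nil
  show ?case
  proof
    assume "sat M I a (exs [] f)"
    then show "\<exists>a'. (\<forall>i. i \<notin> set [] \<longrightarrow> a' i = a i) \<and> (\<forall>i\<in>set []. a' i \<in> M) \<and> sat M I a' f"
      by (intro exI[of _ a]) (simp add: exs_def)
  next
    assume "\<exists>a'. (\<forall>i. i \<notin> set [] \<longrightarrow> a' i = a i) \<and> (\<forall>i\<in>set []. a' i \<in> M) \<and> sat M I a' f"
    then obtain a' where h: "\<forall>i. i \<notin> set [] \<longrightarrow> a' i = a i" "sat M I a' f" by blast
    have "a' = a" using h(1) by (simp add: fun_eq_iff)
    then show "sat M I a (exs [] f)" using h(2) by (simp add: exs_def)
  qed
next
  case (Cons z zs)
  have e: "exs (z # zs) f = Ex z (exs zs f)" by (simp add: exs_def)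
  show ?case
  proof
    assume "sat M I a (exs (z # zs) f)"
    then obtain b where b: "b \<in> M" "sat M I (a(z:=b)) (exs zs f)" by (auto simp: e)
    then obtain a' where h: "(\<forall>i. i \<notin> set zs \<longrightarrow> a' i = (a(z:=b)) i)" "(\<forall>i\<in>set zs. a' i \<in> M)" "sat M I a' f"
      using Cons.IH[THEN iffD1] by blast
    have h1: "\<forall>i. i \<notin> set (z#zs) \<longrightarrow> a' i = a i" using h(1) by simp
    have h2: "\<forall>i\<in>set (z#zs). a' i \<in> M"
    proof
      fix i assume "i \<in> set (z#zs)"
      then show "a' i \<in> M" using h(1,2) b(1) by (cases "i \<in> set zs") simp_all
    qed
    show "\<exists>a'. (\<forall>i. i \<notin> set (z#zs) \<longrightarrow> a' i = a i) \<and> (\<forall>i\<in>set (z#zs). a' i \<in> M) \<and> sat M I a' f"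
      using h1 h2 h(3) by blast
  next
    assume "\<exists>a'. (\<forall>i. i \<notin> set (z#zs) \<longrightarrow> a' i = a i) \<and> (\<forall>i\<in>set (z#zs). a' i \<in> M) \<and> sat M I a' f"
    then obtain a' where a': "\<forall>i. i \<notin> set (z#zs) \<longrightarrow> a' i = a i" "\<forall>i\<in>set (z#zs). a' i \<in> M" "sat M I a' f"
      by blast
    have "\<forall>i. i \<notin> set zs \<longrightarrow> a' i = (a(z := a' z)) i" using a'(1) by auto
    moreover have "\<forall>i\<in>set zs. a' i \<in> M" using a'(2) by simp
    ultimately have "sat M I (a(z := a' z)) (exs zs f)"
      using a'(3) by (intro Cons.IH[THEN iffD2]) blast
    then show "sat M I a (exs (z # zs) f)" using a'(2) by (auto simp: e)
  qed
qed

theorem mainTheorem9: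
  fixes M :: "'a set" and I :: "'p \<Rightarrow> 'a list \<Rightarrow> bool"
    and x :: nat and zs :: "nat list" and \<psi> \<theta> :: "'p fm"
  assumes "M \<noteq> {}"
    and "x \<notin> set zs"
    and "\<forall>z\<in>set zs. z \<notin> fv \<theta>"
    and "non_dependent M I \<psi> x \<theta>"
  shows "denot M I (All x (exs zs (Imp \<theta> \<psi>)))
           = denot M I (Imp (Ex x \<theta>) (exs zs (All x (Imp \<theta> \<psi>))))
       \<and> (models M I (Ex x \<theta>) \<longrightarrow>
           denot M I (All x (exs zs (Imp \<theta> \<psi>))) = denot M I (exs zs (All x (Imp \<theta> \<psi>))))"
proof -
  define A where "A = (\<lambda>a. {a'. (\<forall>i. i \<notin> set zs \<longrightarrow> a' i = a i) \<and> (\<forall>i\<in>set zs. a' i \<in> M)})"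
  have th: "sat M I a' \<theta> = sat M I a \<theta>" if "a' \<in> A a" for a a'
    using that assms(3) unfolding A_def by (intro sat_agree) auto
  have key: "sat M I a (All x (exs zs (Imp \<theta> \<psi>)))
     \<longleftrightarrow> sat M I a (Imp (Ex x \<theta>) (exs zs (All x (Imp \<theta> \<psi>))))"
    if aM: "a \<in> assignments M" for a
  proof
    assume L: "sat M I a (All x (exs zs (Imp \<theta> \<psi>)))"
    show "sat M I a (Imp (Ex x \<theta>) (exs zs (All x (Imp \<theta> \<psi>))))"
    proof (subst sat.simps(6), intro impI)
      assume "sat M I a (Ex x \<theta>)"
      then obtain b0 where b0: "b0 \<in> M" "sat M I (a(x:=b0)) \<theta>" by auto
      then have "sat M I (a(x:=b0)) (exs zs (Imp \<theta> \<psi>))" using L by auto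
      then obtain a'' where a'': "a'' \<in> A (a(x:=b0))" "sat M I a'' (Imp \<theta> \<psi>)"
        unfolding sat_exs A_def by blast
      have t'': "sat M I a'' \<theta>" using th[OF a''(1)] b0 by simp
      have p'': "sat M I a'' \<psi>" using t'' a''(2) by simp
      have a''x: "a'' x = b0" using a''(1) assms(2) unfolding A_def by auto
      have a''M: "a'' \<in> assignments M" using a''(1) aM b0(1) unfolding A_def assignments_def
        by simp (metis fun_upd_apply)
      define a' where "a' = a''(x := a x)"
      have a'A: "a' \<in> A a" using a''(1) assms(2) unfolding A_def a'_def by auto
      have upd: "a'(x:=b) = a''(x:=b)" for b unfolding a'_def by simp
      have "sat M I a' (All x (Imp \<theta> \<psi>))"
      proof (subst sat.simps(8), subst sat.simps(6), intro ballI impI)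
        fix b assume "b \<in> M" "sat M I (a'(x:=b)) \<theta>"
        then show "sat M I (a'(x:=b)) \<psi>"
          using assms(4) a''M t'' p'' unfolding non_dependent_def upd by blast
      qed
      then show "sat M I a (exs zs (All x (Imp \<theta> \<psi>)))"
        unfolding sat_exs using a'A unfolding A_def by blast
    qed
  next
    assume R: "sat M I a (Imp (Ex x \<theta>) (exs zs (All x (Imp \<theta> \<psi>))))"
    show "sat M I a (All x (exs zs (Imp \<theta> \<psi>)))"
    proof (cases "sat M I a (Ex x \<theta>)")
      case True
      then have "sat M I a (exs zs (All x (Imp \<theta> \<psi>)))" using R by simp
      then obtain a' where a': "a' \<in> A a" "sat M I a' (All x (Imp \<theta> \<psi>))"
        unfolding sat_exs A_def by blast
      show ?thesis
      proof (subst sat.simps(8), intro ballI)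
        fix b assume b: "b \<in> M"
        have "a'(x:=b) \<in> A (a(x:=b))" using a'(1) b assms(2) unfolding A_def by auto
        moreover have "sat M I (a'(x:=b)) (Imp \<theta> \<psi>)" using a'(2) b by simp
        ultimately show "sat M I (a(x:=b)) (exs zs (Imp \<theta> \<psi>))"
          unfolding sat_exs A_def by blast
      qed
    next
      case False
      show ?thesis
      proof (subst sat.simps(8), intro ballI)
        fix b assume b: "b \<in> M"
        have "a(x:=b) \<in> A (a(x:=b))" using aM b unfolding A_def assignments_def by auto
        moreover have "sat M I (a(x:=b)) (Imp \<theta> \<psi>)" using False b by auto
        ultimately show "sat M I (a(x:=b)) (exs zs (Imp \<theta> \<psi>))"
          unfolding sat_exs A_def by blast
      qed
    qed
  qed
  have 1: "denot M I (All x (exs zs (Imp \<theta> \<psi>)))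
           = denot M I (Imp (Ex x \<theta>) (exs zs (All x (Imp \<theta> \<psi>))))"
    unfolding denot_def using key by blast
  moreover have "denot M I (All x (exs zs (Imp \<theta> \<psi>))) = denot M I (exs zs (All x (Imp \<theta> \<psi>)))"
    if "models M I (Ex x \<theta>)"
    using that 1 unfolding models_def denot_def by auto
  ultimately show ?thesis by blast
qed

end
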